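(* Let $G$ be a graph with bandwidth $\mathrm{bw}(G)=b$, and let $H$ be a two-terminal edge gadget on $t\ge 2$ vertices. Let $G_H$ be the graph obtained from $G$ by replacing every edge of $G$ by $H$. Then \[ \mathrm{bw}(G_H)\le (b+1)\bigl(1+(t-2)b\bigr). \]
   Context: Graphs are finite and simple. For a graph $G$ on $n$ vertices, $\mathrm{bw}(G)=\min_{\sigma}\max_{uv\in E(G)}|\sigma(u)-\sigma(v)|$, where the minimum ranges over all bijections $\sigma:V(G)\to[n]$. A two-terminal edge gadget is a graph $H$ with two distinguished distinct attachment vertices $\alpha,\beta$. Replacing an edge $uv$ of a graph by $H$ means deleting $uv$, adding a fresh copy $H_{uv}$ of $H$ (disjoint from everything else), and identifying its two attachment vertices with $u$ and $v$ (in either order); replacing every edge does this simultaneously for all edges with independent fresh copies. *)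

theory Defs
  imports Main
begin

definition simple_graph :: "'a set \<Rightarrow> 'a set set \<Rightarrow> bool" where
  "simple_graph V E \<longleftrightarrow> finite V \<and>
     (\<forall>e\<in>E. \<exists>u v. u \<noteq> v \<and> u \<in> V \<and> v \<in> V \<and> e = {u, v})"

definition layout_width :: "('a \<Rightarrow> nat) \<Rightarrow> 'a set set \<Rightarrow> nat" where
  "layout_width \<sigma> E = Max (insert 0 {nat \<bar>int (\<sigma> u) - int (\<sigma> v)\<bar> | u v. {u, v} \<in> E})"

definition bandwidth :: "'a set \<Rightarrow> 'a set set \<Rightarrow> nat" where
  "bandwidth V E = Min {layout_width \<sigma> E | \<sigma>. bij_betw \<sigma> V {1..card V}}"

text \<open>Replacing every edge e of G=(V,E) by a fresh copy of the gadget H=(W,F) with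
  attachment vertices al, be. The orientation ori e = (u,v) says that al is identified
  with u and be with v.\<close>
definition gadget_map ::
  "('a set \<Rightarrow> 'a \<times> 'a) \<Rightarrow> 'b \<Rightarrow> 'b \<Rightarrow> 'a set \<Rightarrow> 'b \<Rightarrow> 'a + ('a set \<times> 'b)" where
  "gadget_map ori al be e x =
     (if x = al then Inl (fst (ori e)) else if x = be then Inl (snd (ori e)) else Inr (e, x))"

definition replaced_vertices ::
  "'a set \<Rightarrow> 'a set set \<Rightarrow> 'b set \<Rightarrow> 'b \<Rightarrow> 'b \<Rightarrow> ('a + ('a set \<times> 'b)) set" where
  "replaced_vertices V E W al be = Inl ` V \<union> {Inr (e, x) | e x. e \<in> E \<and> x \<in> W - {al, be}}"

definition replaced_edges ::
  "'a set set \<Rightarrow> 'b set set \<Rightarrow> 'b \<Rightarrow> 'b \<Rightarrow> ('a set \<Rightarrow> 'a \<times> 'a)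
     \<Rightarrow> ('a + ('a set \<times> 'b)) set set" where
  "replaced_edges E F al be ori = {gadget_map ori al be e ` f | e f. e \<in> E \<and> f \<in> F}"

end

theory Submission
  imports Defs
begin

lemma lw_le:
  assumes "\<And>u v. {u,v} \<in> E \<Longrightarrow> nat \<bar>int (\<sigma> u) - int (\<sigma> v)\<bar> \<le> K"
  shows "layout_width \<sigma> E \<le> K"
proof -
  let ?S = "{nat \<bar>int (\<sigma> u) - int (\<sigma> v)\<bar> | u v. {u, v} \<in> E}"
  have "insert 0 ?S \<subseteq> {..K}" using assms by auto
  hence fin: "finite (insert 0 ?S)" by (rule finite_subset[OF _ finite_atMost])
  have "Max (insert 0 ?S) \<in> insert 0 ?S" using fin by (rule Max_in) simp
  thus ?thesis unfolding layout_width_def using \<open>insert 0 ?S \<subseteq> {..K}\<close> by auto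
qed

lemma lw_ge:
  assumes "finite V" "\<And>u v. {u,v} \<in> E \<Longrightarrow> u \<in> V \<and> v \<in> V" "{u,v} \<in> E"
  shows "nat \<bar>int (\<sigma> u) - int (\<sigma> v)\<bar> \<le> layout_width \<sigma> E"
proof -
  let ?S = "{nat \<bar>int (\<sigma> u) - int (\<sigma> v)\<bar> | u v. {u, v} \<in> E}"
  have "?S \<subseteq> (\<lambda>(u,v). nat \<bar>int (\<sigma> u) - int (\<sigma> v)\<bar>) ` (V \<times> V)"
    using assms(2) by fastforce
  hence "finite ?S" by (rule finite_subset[OF _ finite_imageI[OF finite_cartesian_product[OF assms(1) assms(1)]]])
  hence fin: "finite (insert 0 ?S)" by simp
  show ?thesis unfolding layout_width_def using fin assms(3) by (intro Max_ge) auto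
qed

lemma bw_set_finite:
  assumes "\<And>u v. {u,v} \<in> E \<Longrightarrow> u \<in> V \<and> v \<in> V"
  shows "finite {layout_width \<sigma> E | \<sigma>. bij_betw \<sigma> V {1..card V}}"
proof -
  have "{layout_width \<sigma> E | \<sigma>. bij_betw \<sigma> V {1..card V}} \<subseteq> {..card V}"
  proof
    fix w assume "w \<in> {layout_width \<sigma> E | \<sigma>. bij_betw \<sigma> V {1..card V}}"
    then obtain \<sigma> where s: "bij_betw \<sigma> V {1..card V}" and w: "w = layout_width \<sigma> E" by blast
    have "layout_width \<sigma> E \<le> card V"
    proof (rule lw_le)
      fix u v assume uv: "{u,v} \<in> E"
      have "u \<in> V" "v \<in> V" using assms[OF uv] by simp_all
      hence "\<sigma> u \<in> {1..card V}" "\<sigma> v \<in> {1..card V}" using bij_betw_apply[OF s] by simp_all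
      thus "nat \<bar>int (\<sigma> u) - int (\<sigma> v)\<bar> \<le> card V" by auto
    qed
    thus "w \<in> {..card V}" using w by simp
  qed
  thus ?thesis by (rule finite_subset[OF _ finite_atMost])
qed

lemma bw_le:
  assumes "\<And>u v. {u,v} \<in> E \<Longrightarrow> u \<in> V \<and> v \<in> V" "bij_betw \<sigma> V {1..card V}"
  shows "bandwidth V E \<le> layout_width \<sigma> E"
  unfolding bandwidth_def using bw_set_finite[OF assms(1)] assms(2) by (intro Min_le) auto

lemma bw_attained:
  assumes "finite V" "\<And>u v. {u,v} \<in> E \<Longrightarrow> u \<in> V \<and> v \<in> V"
  shows "\<exists>\<sigma>. bij_betw \<sigma> V {1..card V} \<and> layout_width \<sigma> E = bandwidth V E"
proof -
  obtain h where "bij_betw h V {1..card V}" using finite_same_card_bij[OF assms(1), of "{1..card V}"] by auto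
  hence ne: "{layout_width \<sigma> E | \<sigma>. bij_betw \<sigma> V {1..card V}} \<noteq> {}" by blast
  have "bandwidth V E \<in> {layout_width \<sigma> E | \<sigma>. bij_betw \<sigma> V {1..card V}}"
    unfolding bandwidth_def using Min_in[OF bw_set_finite[OF assms(2)] ne] .
  thus ?thesis by auto
qed

lemma rank_exists:
  assumes "finite S" "inj_on p S"
  shows "\<exists>r. bij_betw r S {1..card S} \<and>
     (\<forall>x\<in>S. \<forall>y\<in>S. nat \<bar>int (r x) - int (r y)\<bar> \<le> nat \<bar>int ((p x)::nat) - int (p y)\<bar>)"
proof -
  define r where "r x = card {z\<in>S. p z < p x} + 1" for x
  have mono: "r y - r x \<le> p y - p x \<and> r x \<le> r y" if "x \<in> S" "y \<in> S" "p x \<le> p y" for x y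
  proof -
    have un: "{z\<in>S. p z < p y} = {z\<in>S. p z < p x} \<union> {z\<in>S. p x \<le> p z \<and> p z < p y}" 
      using that by auto
    have c: "card {z\<in>S. p z < p y} = card {z\<in>S. p z < p x} + card {z\<in>S. p x \<le> p z \<and> p z < p y}"
      unfolding un using assms(1) by (intro card_Un_disjoint) auto
    have "card {z\<in>S. p x \<le> p z \<and> p z < p y} \<le> card {p x..<p y}"
      by (rule card_inj_on_le[where f=p]) (auto intro: inj_on_subset[OF assms(2)])
    thus ?thesis using c unfolding r_def by simp
  qed
  have strict: "r x < r y" if "x \<in> S" "y \<in> S" "p x < p y" for x y
  proof -
    have "{z\<in>S. p z < p x} \<subset> {z\<in>S. p z < p y}" using that by auto
    hence "card {z\<in>S. p z < p x} < card {z\<in>S. p z < p y}"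
      using assms(1) by (intro psubset_card_mono) auto
    thus ?thesis unfolding r_def by simp
  qed
  have inj: "inj_on r S"
  proof (rule inj_onI)
    fix x y assume xy: "x \<in> S" "y \<in> S" "r x = r y"
    show "x = y"
    proof (rule ccontr)
      assume "x \<noteq> y"
      hence "p x \<noteq> p y" using assms(2) xy inj_on_def by metis
      thus False using strict xy by (metis less_irrefl nat_neq_iff)
    qed
  qed
  have sub: "r ` S \<subseteq> {1..card S}"
  proof
    fix w assume "w \<in> r ` S"
    then obtain x where x: "x \<in> S" "w = r x" by blast
    have "{z\<in>S. p z < p x} \<subset> S" using x by auto
    hence "card {z\<in>S. p z < p x} < card S" using assms(1) psubset_card_mono by blast
    thus "w \<in> {1..card S}" using x unfolding r_def by auto
  qed
  have "card (r ` S) = card {1..card S}" using card_image[OF inj] by simp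
  hence "r ` S = {1..card S}" using sub by (intro card_subset_eq) auto
  hence bij: "bij_betw r S {1..card S}" using inj bij_betw_def by blast
  have "nat \<bar>int (r x) - int (r y)\<bar> \<le> nat \<bar>int (p x) - int (p y)\<bar>" if "x \<in> S" "y \<in> S" for x y
  proof (cases "p x \<le> p y")
    case True then show ?thesis using mono[OF that True] by auto
  next
    case False then show ?thesis using mono[OF that(2,1)] by auto
  qed
  thus ?thesis using bij by blast
qed


lemma absdiff: "(L::nat) \<le> x \<Longrightarrow> x \<le> H \<Longrightarrow> L \<le> y \<Longrightarrow> y \<le> H \<Longrightarrow> H - L \<le> K
  \<Longrightarrow> nat \<bar>int x - int y\<bar> \<le> K" by arith

theorem mainTheorem16:
  fixes V :: "'a set" and E :: "'a set set"
    and W :: "'b set" and F :: "'b set set" and al be :: 'b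
    and ori :: "'a set \<Rightarrow> 'a \<times> 'a" and b t :: nat
  assumes "simple_graph V E"
    and "bandwidth V E = b"
    and "simple_graph W F"
    and "al \<in> W" and "be \<in> W" and "al \<noteq> be"
    and "card W = t" and "t \<ge> 2"
    and "\<forall>e\<in>E. e = {fst (ori e), snd (ori e)}"
  shows "bandwidth (replaced_vertices V E W al be) (replaced_edges E F al be ori)
           \<le> (b + 1) * (1 + (t - 2) * b)"
proof -
  have finV: "finite V" using assms(1) unfolding simple_graph_def by blast
  have SG: "\<forall>e\<in>E. \<exists>u v. u \<noteq> v \<and> u \<in> V \<and> v \<in> V \<and> e = {u, v}"
    using assms(1) unfolding simple_graph_def by (rule conjunct2)
  have EP: "e \<subseteq> V \<and> card e = 2" if eE: "e \<in> E" for e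
  proof -
    obtain u v where "u \<noteq> v" "u \<in> V" "v \<in> V" "e = {u, v}" using SG eE by meson
    thus ?thesis by simp
  qed
  have EV: "u \<in> V \<and> v \<in> V" if "{u,v} \<in> E" for u v
    using EP[OF that] by simp
  have finE: "finite E"
    using EP finV by (intro finite_subset[of E "Pow V"]) auto
  have finW: "finite W" using assms(3) unfolding simple_graph_def by blast
  obtain \<sigma> where sbij: "bij_betw \<sigma> V {1..card V}" and sw: "layout_width \<sigma> E = b"
    using bw_attained[OF finV EV] assms(2) by blast
  have sinj: "inj_on \<sigma> V" using sbij bij_betw_def by blast
  have sb: "nat \<bar>int (\<sigma> u) - int (\<sigma> v)\<bar> \<le> b" if "{u,v} \<in> E" for u v
    using lw_ge[OF finV EV that, of \<sigma>] sw by simp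
  let ?I = "W - {al, be}"
  define n where "n = t - 2"
  have cI: "card ?I = n" using assms(4-8) finW unfolding n_def by (simp add: card_Diff_subset)
  obtain idx where idx: "bij_betw idx ?I {0..<n}"
    using ex_bij_betw_finite_nat[of ?I] finW cI by auto
  define M where "M = 1 + n * b"
  have Mpos: "0 < M" unfolding M_def by simp
  define lo where "lo e = (if \<sigma> (fst (ori e)) < \<sigma> (snd (ori e)) then fst (ori e) else snd (ori e))" for e
  define hi where "hi e = (if \<sigma> (fst (ori e)) < \<sigma> (snd (ori e)) then snd (ori e) else fst (ori e))" for e
  define off where "off e x = 1 + (\<sigma> (hi e) - \<sigma> (lo e) - 1) * n + idx x" for e x
  define p where "p y = (case y of Inl v \<Rightarrow> \<sigma> v * M | Inr (e, x) \<Rightarrow> \<sigma> (lo e) * M + off e x)" for y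
  have E1: "lo e \<in> V \<and> hi e \<in> V \<and> e = {lo e, hi e} \<and> \<sigma> (lo e) < \<sigma> (hi e) \<and> \<sigma> (hi e) - \<sigma> (lo e) \<le> b
      \<and> {fst (ori e), snd (ori e)} = {lo e, hi e}" if "e \<in> E" for e
  proof -
    define x1 where "x1 = fst (ori e)"
    define x2 where "x2 = snd (ori e)"
    have e: "e = {x1, x2}" using assms(9) that unfolding x1_def x2_def by blast
    have inV: "x1 \<in> V" "x2 \<in> V" using EP[OF that] e by auto
    have c2: "card {x1, x2} = 2" using EP[OF that] e by simp
    have ne: "x1 \<noteq> x2"
    proof
      assume "x1 = x2" thus False using c2 by simp
    qed
    have "\<sigma> x1 \<noteq> \<sigma> x2" using sinj inV ne inj_on_def by metis
    moreover have "nat \<bar>int (\<sigma> x1) - int (\<sigma> x2)\<bar> \<le> b" using sb e that by metis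
    moreover have "lo e = (if \<sigma> x1 < \<sigma> x2 then x1 else x2)" unfolding lo_def x1_def x2_def by simp
    moreover have "hi e = (if \<sigma> x1 < \<sigma> x2 then x2 else x1)" unfolding hi_def x1_def x2_def by simp
    ultimately show ?thesis using inV e unfolding x1_def[symmetric] x2_def[symmetric]
      by (cases "\<sigma> x1 < \<sigma> x2") (auto simp: insert_commute)
  qed
  have E1a: "lo e \<in> V \<and> hi e \<in> V \<and> \<sigma> (lo e) < \<sigma> (hi e) \<and> \<sigma> (hi e) - \<sigma> (lo e) \<le> b
      \<and> {fst (ori e), snd (ori e)} = {lo e, hi e}" if "e \<in> E" for e
    using E1[OF that] by blast
  have E1e: "e = {lo e, hi e}" if "e \<in> E" for e
    using E1[OF that] by blast
  have idxlt: "idx x < n" if "x \<in> ?I" for x using idx that bij_betw_apply by fastforce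
  have offb: "1 \<le> off e x \<and> off e x < M" if "e \<in> E" "x \<in> ?I" for e x
  proof -
    define d where "d = \<sigma> (hi e) - \<sigma> (lo e)"
    have d: "1 \<le> d" "d \<le> b" using E1a[OF that(1)] unfolding d_def by auto
    have "(d - 1) * n + n = d * n" using d(1) by (metis Suc_diff_le diff_Suc_1 mult_Suc add.commute)
    moreover have "d * n \<le> b * n" using d(2) by simp
    moreover have "off e x = 1 + (d - 1) * n + idx x" unfolding off_def d_def by simp
    moreover have "n * b = b * n" by (rule mult.commute)
    ultimately show ?thesis using idxlt[OF that(2)] unfolding M_def by linarith
  qed
  let ?V' = "replaced_vertices V E W al be"
  let ?E' = "replaced_edges E F al be ori"
  have V'fin: "finite ?V'"
  proof -
    have "{Inr (e, x) | e x. e \<in> E \<and> x \<in> ?I} \<subseteq> Inr ` (E \<times> W)" by auto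
    hence "finite {Inr (e, x) | e x. e \<in> E \<and> x \<in> ?I}" by (rule finite_subset[OF _ finite_imageI[OF finite_cartesian_product[OF finE finW]]])
    thus ?thesis unfolding replaced_vertices_def using finV by simp
  qed
  have pinj: "inj_on p ?V'"
  proof (rule inj_onI)
    fix y z assume y: "y \<in> ?V'" and z: "z \<in> ?V'" and pyz: "p y = p z"
    show "y = z"
    proof (cases y)
      case (Inl v)
      hence v: "v \<in> V" using y unfolding replaced_vertices_def by auto
      show ?thesis
      proof (cases z)
        case (Inl w)
        hence "w \<in> V" using z unfolding replaced_vertices_def by auto
        moreover have "\<sigma> v * M = \<sigma> w * M" using pyz Inl \<open>y = Inl v\<close> unfolding p_def by simp
        hence "\<sigma> v = \<sigma> w" using Mpos by simp
        ultimately show ?thesis using v Inl \<open>y = Inl v\<close> sinj inj_on_def by metis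
      next
        case (Inr ex)
        then obtain e x where ex: "z = Inr (e, x)" "e \<in> E" "x \<in> ?I" using z unfolding replaced_vertices_def by auto
        have "\<sigma> v * M = \<sigma> (lo e) * M + off e x" using pyz ex \<open>y = Inl v\<close> unfolding p_def by simp
        hence "(\<sigma> v * M) mod M = (\<sigma> (lo e) * M + off e x) mod M" by simp
        hence "0 = off e x" using offb[OF ex(2,3)] Mpos by simp
        thus ?thesis using offb[OF ex(2,3)] Mpos by simp
      qed
    next
      case (Inr ey)
      then obtain e x where ex: "y = Inr (e, x)" "e \<in> E" "x \<in> ?I" using y unfolding replaced_vertices_def by auto
      show ?thesis
      proof (cases z)
        case (Inl v)
        have "\<sigma> v * M = \<sigma> (lo e) * M + off e x" using pyz ex Inl unfolding p_def by simp
        hence "(\<sigma> v * M) mod M = (\<sigma> (lo e) * M + off e x) mod M" by simp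
        hence "0 = off e x" using offb[OF ex(2,3)] Mpos by simp
        thus ?thesis using offb[OF ex(2,3)] Mpos by simp
      next
        case (Inr ez)
        then obtain e' x' where ex': "z = Inr (e', x')" "e' \<in> E" "x' \<in> ?I" using z unfolding replaced_vertices_def by auto
        have eq: "\<sigma> (lo e) * M + off e x = \<sigma> (lo e') * M + off e' x'" using pyz ex ex' unfolding p_def by simp
        have o1: "off e x < M" "off e' x' < M" using offb ex ex' by auto
        have "(\<sigma> (lo e) * M + off e x) div M = (\<sigma> (lo e') * M + off e' x') div M" using eq by simp
        hence l: "\<sigma> (lo e) = \<sigma> (lo e')" using o1 Mpos by simp
        have "(\<sigma> (lo e) * M + off e x) mod M = (\<sigma> (lo e') * M + off e' x') mod M" using eq by simp
        hence "off e x = off e' x'" using o1 Mpos by simp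
        hence eq2: "(\<sigma> (hi e) - \<sigma> (lo e) - 1) * n + idx x = (\<sigma> (hi e') - \<sigma> (lo e') - 1) * n + idx x'"
          unfolding off_def by simp
        have i1: "idx x < n" "idx x' < n" using idxlt ex ex' by auto
        have "((\<sigma> (hi e) - \<sigma> (lo e) - 1) * n + idx x) div n = ((\<sigma> (hi e') - \<sigma> (lo e') - 1) * n + idx x') div n"
          using eq2 by simp
        hence "\<sigma> (hi e) - \<sigma> (lo e) - 1 = \<sigma> (hi e') - \<sigma> (lo e') - 1" using i1 by simp
        hence h: "\<sigma> (hi e) = \<sigma> (hi e')" using l E1a[OF ex(2)] E1a[OF ex'(2)] by linarith
        have "((\<sigma> (hi e) - \<sigma> (lo e) - 1) * n + idx x) mod n = ((\<sigma> (hi e') - \<sigma> (lo e') - 1) * n + idx x') mod n"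
          using eq2 by simp
        hence "idx x = idx x'" using i1 by simp
        hence xx: "x = x'" using idx ex ex' bij_betw_def inj_on_def by metis
        have "lo e = lo e'" using l sinj E1a[OF ex(2)] E1a[OF ex'(2)] inj_on_def by metis
        moreover have "hi e = hi e'" using h sinj E1a[OF ex(2)] E1a[OF ex'(2)] inj_on_def by metis
        ultimately have "e = e'" using E1e[OF ex(2)] E1e[OF ex'(2)] by metis
        thus ?thesis using xx ex ex' by simp
      qed
    qed
  qed
  define g where "g e = gadget_map ori al be e" for e
  have gad: "g e y \<in> ?V' \<and> \<sigma> (lo e) * M \<le> p (g e y) \<and> p (g e y) \<le> \<sigma> (hi e) * M"
    if "e \<in> E" "y \<in> W" for e y
  proof -
    note E = E1a[OF that(1)]
    have lohi: "\<sigma> (lo e) * M \<le> \<sigma> (hi e) * M" using E by simp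
    show ?thesis
    proof (cases "y = al \<or> y = be")
      case True
      hence "\<exists>v. g e y = Inl v \<and> (v = lo e \<or> v = hi e)"
        using E unfolding g_def gadget_map_def by (auto simp: doubleton_eq_iff)
      then obtain v where v: "g e y = Inl v" "v = lo e \<or> v = hi e" by blast
      have "v \<in> V" using v E by auto
      thus ?thesis using v lohi unfolding p_def replaced_vertices_def by auto
    next
      case False
      hence gy: "g e y = Inr (e, y)" unfolding g_def gadget_map_def by auto
      have yI: "y \<in> ?I" using False that by auto
      have "\<sigma> (lo e) * M + off e y \<le> \<sigma> (lo e) * M + M" using offb[OF that(1) yI] by simp
      also have "\<dots> = (\<sigma> (lo e) + 1) * M" by simp
      also have "\<dots> \<le> \<sigma> (hi e) * M" using E by (intro mult_le_mono1) auto
      finally show ?thesis using gy yI that(1) unfolding p_def replaced_vertices_def by auto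
    qed
  qed
  have E'p: "a \<in> ?V' \<and> c \<in> ?V' \<and> nat \<bar>int (p a) - int (p c)\<bar> \<le> b * M" if ac: "{a, c} \<in> ?E'" for a c
  proof -
    obtain e f where ef: "e \<in> E" "f \<in> F" "{a, c} = g e ` f" using ac unfolding replaced_edges_def g_def by auto
    have SF: "\<forall>e\<in>F. \<exists>u v. u \<noteq> v \<and> u \<in> W \<and> v \<in> W \<and> e = {u, v}"
      using assms(3) unfolding simple_graph_def by (rule conjunct2)
    obtain u v where "u \<in> W" "v \<in> W" "f = {u, v}" using SF ef(2) by meson
    hence fW: "f \<subseteq> W" by simp
    have "a \<in> g e ` f" unfolding ef(3)[symmetric] by simp
    then obtain y1 where y1: "y1 \<in> f" "a = g e y1" by (rule imageE)
    have "c \<in> g e ` f" unfolding ef(3)[symmetric] by simp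
    then obtain y2 where y2: "y2 \<in> f" "c = g e y2" by (rule imageE)
    have y: "y1 \<in> W" "y2 \<in> W" using fW y1 y2 by auto
    note G1 = gad[OF ef(1) y(1)] and G2 = gad[OF ef(1) y(2)]
    have "(\<sigma> (hi e) - \<sigma> (lo e)) * M \<le> b * M" using E1a[OF ef(1)] by (intro mult_le_mono1) auto
    hence HL: "\<sigma> (hi e) * M - \<sigma> (lo e) * M \<le> b * M" by (simp add: diff_mult_distrib)
    have A1: "\<sigma> (lo e) * M \<le> p a" "p a \<le> \<sigma> (hi e) * M" using G1 y1(2) by simp_all
    have A2: "\<sigma> (lo e) * M \<le> p c" "p c \<le> \<sigma> (hi e) * M" using G2 y2(2) by simp_all
    have "nat \<bar>int (p a) - int (p c)\<bar> \<le> b * M"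
      by (rule absdiff[OF A1 A2 HL])
    moreover have "a \<in> ?V'" "c \<in> ?V'" using G1 G2 y1(2) y2(2) by simp_all
    ultimately show ?thesis by simp
  qed
  obtain r where rbij: "bij_betw r ?V' {1..card ?V'}"
    and rp: "\<forall>x\<in>?V'. \<forall>y\<in>?V'. nat \<bar>int (r x) - int (r y)\<bar> \<le> nat \<bar>int (p x) - int (p y)\<bar>"
    using rank_exists[OF V'fin pinj] by blast
  have EV': "u \<in> ?V' \<and> v \<in> ?V'" if h: "{u,v} \<in> ?E'" for u v
    using E'p[OF h] by simp
  have "bandwidth ?V' ?E' \<le> layout_width r ?E'"
    by (rule bw_le[OF EV' rbij])
  also have "layout_width r ?E' \<le> b * M"
  proof (rule lw_le)
    fix u v assume h: "{u, v} \<in> ?E'"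
    have "nat \<bar>int (r u) - int (r v)\<bar> \<le> nat \<bar>int (p u) - int (p v)\<bar>" using rp EV'[OF h] by blast
    thus "nat \<bar>int (r u) - int (r v)\<bar> \<le> b * M" using E'p[OF h] by linarith
  qed
  also have "b * M \<le> (b + 1) * M" by (rule mult_le_mono1) simp
  also have "(b + 1) * M = (b + 1) * (1 + (t - 2) * b)" unfolding M_def n_def by simp
  finally show ?thesis .
qed

end
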